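(* Let $c>\frac12$ and $\delta>0$ be fixed. Let $\ell\ge3$ and let $\ell_1,\ell_2,\ell_3$ be positive integers with $\ell_1+\ell_2+\ell_3=\ell$. Then there exist constants $K>0$ and $0<\rho<1$, depending only on $\ell,c,\delta$ (not on $n$), such that for all $n\ge1$ $$V_n^{-2\ell c}\int_{\mathbb R^n}\int_{\mathbb R^n}f^*_{c,\delta}(\mathbf x_1)^{\ell_1}f^*_{c,\delta}(\mathbf x_2)^{\ell_2}f^*_{c,\delta}(\mathbf x_1+\mathbf x_2)^{\ell_3}\,d\mathbf x_1\,d\mathbf x_2\le K\rho^n.$$
   Context: $V_n=\pi^{n/2}/\Gamma(\frac n2+1)$ is the volume of the unit ball in $\mathbb R^n$, $R_n(\delta)=(\delta/V_n)^{1/n}$, and $f^*_{c,\delta}(\mathbf x)=\big(|\mathbf x|^n+R_n(\delta)^n\big)^{-2c}$ for $\mathbf x\in\mathbb R^n$. *)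

theory Defs
  imports "HOL-Analysis.Analysis"
begin

text \<open>Points of R^n are represented as functions nat => real on the index set {..<n},
  with the product Lebesgue measure PiM {..<n} (lambda _. lborel).\<close>

definition Vn :: "nat \<Rightarrow> real" where
  "Vn n = pi powr (real n / 2) / Gamma (real n / 2 + 1)"

definition Rn :: "nat \<Rightarrow> real \<Rightarrow> real" where
  "Rn n \<delta> = (\<delta> / Vn n) powr (1 / real n)"

definition eucl_norm :: "nat \<Rightarrow> (nat \<Rightarrow> real) \<Rightarrow> real" where
  "eucl_norm n x = sqrt (\<Sum>i<n. (x i)\<^sup>2)"

definition fstar :: "nat \<Rightarrow> real \<Rightarrow> real \<Rightarrow> (nat \<Rightarrow> real) \<Rightarrow> real" where
  "fstar n c \<delta> x = (eucl_norm n x ^ n + Rn n \<delta> ^ n) powr (- 2 * c)"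

abbreviation Rspace :: "nat \<Rightarrow> (nat \<Rightarrow> real) measure" where
  "Rspace n \<equiv> PiM {..<n} (\<lambda>_. lborel)"

end

theory Submission
  imports Defs "HOL-Probability.Probability"
begin

lemma gauss1:
  fixes p q :: real assumes p: "p > 0"
  shows "(\<integral>\<^sup>+y. ennreal (exp (-(p*y\<^sup>2 + 2*q*y))) \<partial>lborel) = ennreal (sqrt (pi/p) * exp (q\<^sup>2/p))"
proof -
  define \<sigma> where "\<sigma> = sqrt (1/(2*p))"
  have s2: "\<sigma>\<^sup>2 = 1/(2*p)" using p by (simp add: \<sigma>_def)
  have sp: "\<sigma> > 0" using p by (simp add: \<sigma>_def)
  have eq: "exp (-(p*y\<^sup>2 + 2*q*y)) = (sqrt (pi/p) * exp (q\<^sup>2/p)) * normal_density (-q/p) \<sigma> y" for y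
  proof -
    have "sqrt (2*pi*\<sigma>\<^sup>2) = sqrt (pi/p)" using s2 by simp
    moreover have "-(y - -q/p)\<^sup>2/(2*\<sigma>\<^sup>2) = -(p*y\<^sup>2 + 2*q*y) - q\<^sup>2/p"
    proof -
      have "2*\<sigma>\<^sup>2 = 1/p" using s2 by simp
      then have "-(y - -q/p)\<^sup>2/(2*\<sigma>\<^sup>2) = -(y + q/p)\<^sup>2 * p" by (simp add: \<open>2*\<sigma>\<^sup>2 = 1/p\<close>)
      also have "\<dots> = -(p*y\<^sup>2 + 2*q*y) - q\<^sup>2/p" using p by (simp add: field_simps power2_eq_square)
      finally show ?thesis .
    qed
    ultimately have "normal_density (-q/p) \<sigma> y = 1 / sqrt (pi/p) * exp (-(p*y\<^sup>2 + 2*q*y) - q\<^sup>2/p)"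
      unfolding normal_density_def by simp
    moreover have "sqrt (pi/p) > 0" using p by simp
    ultimately show ?thesis using p by (simp add: exp_diff)
  qed
  have "(\<integral>\<^sup>+y. ennreal (exp (-(p*y\<^sup>2 + 2*q*y))) \<partial>lborel)
     = (\<integral>\<^sup>+y. ennreal (sqrt (pi/p) * exp (q\<^sup>2/p)) * ennreal (normal_density (-q/p) \<sigma> y) \<partial>lborel)"
    by (rule nn_integral_cong, subst eq, rule ennreal_mult) (use p in auto)
  also have "\<dots> = ennreal (sqrt (pi/p) * exp (q\<^sup>2/p)) * (\<integral>\<^sup>+y. ennreal (normal_density (-q/p) \<sigma> y) \<partial>lborel)"
    by (rule nn_integral_cmult) simp
  also have "(\<integral>\<^sup>+y. ennreal (normal_density (-q/p) \<sigma> y) \<partial>lborel) = 1"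
    by (subst nn_integral_eq_integral) (use sp in auto)
  finally show ?thesis by simp
qed

lemma prod_lborel_nn:
  fixes g :: "nat \<Rightarrow> real \<Rightarrow> real"
  assumes "\<And>i. g i \<in> borel_measurable borel" "\<And>i y. g i y \<ge> 0"
  shows "(\<integral>\<^sup>+x. ennreal (\<Prod>i<n. g i (x i)) \<partial>Rspace n) = (\<Prod>i<n. \<integral>\<^sup>+y. ennreal (g i y) \<partial>lborel)"
proof -
  interpret product_sigma_finite "\<lambda>_::nat. lborel::real measure" by standard
  have "(\<integral>\<^sup>+x. ennreal (\<Prod>i<n. g i (x i)) \<partial>Rspace n) = (\<integral>\<^sup>+x. (\<Prod>i<n. ennreal (g i (x i))) \<partial>Rspace n)"
    by (simp add: prod_ennreal assms)
  also have "\<dots> = (\<Prod>i<n. \<integral>\<^sup>+y. ennreal (g i y) \<partial>lborel)"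
    by (rule product_nn_integral_prod) (use assms in auto)
  finally show ?thesis .
qed

lemma gaussN_inner:
  fixes a b c :: real and s :: "nat \<Rightarrow> real"
  assumes "b + c > 0"
  shows "(\<integral>\<^sup>+x2. ennreal (\<Prod>i<n. exp (-(a*(s i)\<^sup>2 + b*(x2 i)\<^sup>2 + c*(s i + x2 i)\<^sup>2))) \<partial>Rspace n)
     = ennreal (\<Prod>i<n. sqrt (pi/(b+c)) * exp (-((a*b+b*c+c*a)/(b+c)) * (s i)\<^sup>2))"
proof -
  have "(\<integral>\<^sup>+x2. ennreal (\<Prod>i<n. exp (-(a*(s i)\<^sup>2 + b*(x2 i)\<^sup>2 + c*(s i + x2 i)\<^sup>2))) \<partial>Rspace n)
     = (\<Prod>i<n. \<integral>\<^sup>+y. ennreal (exp (-(a*(s i)\<^sup>2 + b*y\<^sup>2 + c*(s i + y)\<^sup>2))) \<partial>lborel)"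
    by (rule prod_lborel_nn[where g="\<lambda>i y. exp (-(a*(s i)\<^sup>2 + b*y\<^sup>2 + c*(s i + y)\<^sup>2))"]) auto
  also have "\<dots> = (\<Prod>i<n. ennreal (sqrt (pi/(b+c)) * exp (-((a*b+b*c+c*a)/(b+c)) * (s i)\<^sup>2)))"
  proof (rule prod.cong[OF refl])
    fix i
    have e: "exp (-(a*(s i)\<^sup>2 + b*y\<^sup>2 + c*(s i + y)\<^sup>2)) =
      exp (-((a+c)*(s i)\<^sup>2)) * exp (-((b+c)*y\<^sup>2 + 2*(c * s i)*y))" for y
      unfolding mult_exp_exp by (rule arg_cong[where f=exp]) (simp add: algebra_simps power2_eq_square)
    have "(\<integral>\<^sup>+y. ennreal (exp (-(a*(s i)\<^sup>2 + b*y\<^sup>2 + c*(s i + y)\<^sup>2))) \<partial>lborel)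
      = (\<integral>\<^sup>+y. ennreal (exp (-((a+c)*(s i)\<^sup>2))) * ennreal (exp (-((b+c)*y\<^sup>2 + 2*(c * s i)*y))) \<partial>lborel)"
      by (rule nn_integral_cong, subst e, rule ennreal_mult) auto
    also have "\<dots> = ennreal (exp (-((a+c)*(s i)\<^sup>2))) * (\<integral>\<^sup>+y. ennreal (exp (-((b+c)*y\<^sup>2 + 2*(c * s i)*y))) \<partial>lborel)"
      by (rule nn_integral_cmult) simp
    also have "\<dots> = ennreal (exp (-((a+c)*(s i)\<^sup>2))) * ennreal (sqrt (pi/(b+c)) * exp ((c * s i)\<^sup>2/(b+c)))"
      using gauss1[OF assms] by simp
    also have "\<dots> = ennreal (sqrt (pi/(b+c)) * exp (-((a*b+b*c+c*a)/(b+c)) * (s i)\<^sup>2))"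
    proof -
      have "-((a+c)*(s i)\<^sup>2) + (c * s i)\<^sup>2/(b+c) = -((a*b+b*c+c*a)/(b+c)) * (s i)\<^sup>2"
        using assms by (simp add: field_simps power2_eq_square)
      then have "exp (-((a+c)*(s i)\<^sup>2)) * (sqrt (pi/(b+c)) * exp ((c * s i)\<^sup>2/(b+c)))
         = sqrt (pi/(b+c)) * exp (-((a*b+b*c+c*a)/(b+c)) * (s i)\<^sup>2)"
        by (metis (no_types, lifting) mult.left_commute mult_exp_exp)
      moreover have "0 \<le> sqrt (pi / (b + c)) * exp ((c * s i)\<^sup>2 / (b + c))" using assms by simp
      ultimately show ?thesis
        by (subst ennreal_mult[symmetric]) (simp_all only:, simp)
    qed
    finally show "(\<integral>\<^sup>+y. ennreal (exp (-(a*(s i)\<^sup>2 + b*y\<^sup>2 + c*(s i + y)\<^sup>2))) \<partial>lborel)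
      = ennreal (sqrt (pi/(b+c)) * exp (-((a*b+b*c+c*a)/(b+c)) * (s i)\<^sup>2))" .
  qed
  also have "\<dots> = ennreal (\<Prod>i<n. sqrt (pi/(b+c)) * exp (-((a*b+b*c+c*a)/(b+c)) * (s i)\<^sup>2))"
    by (rule prod_ennreal) (use assms in simp)
  finally show ?thesis .
qed

lemma gaussN_outer:
  fixes K P :: real
  assumes "P > 0" "K \<ge> 0"
  shows "(\<integral>\<^sup>+x. ennreal (\<Prod>i<n. K * exp (-P * (x i)\<^sup>2)) \<partial>Rspace n) = ennreal ((K * sqrt (pi/P))^n)"
proof -
  have "(\<integral>\<^sup>+x. ennreal (\<Prod>i<n. K * exp (-P * (x i)\<^sup>2)) \<partial>Rspace n)
     = (\<Prod>i<n. \<integral>\<^sup>+y. ennreal (K * exp (-P * y\<^sup>2)) \<partial>lborel)"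
    by (rule prod_lborel_nn[where g="\<lambda>i y. K * exp (-P * y\<^sup>2)"]) (use assms in auto)
  also have "(\<integral>\<^sup>+y. ennreal (K * exp (-P * y\<^sup>2)) \<partial>lborel) = ennreal K * (\<integral>\<^sup>+y. ennreal (exp (-(P * y\<^sup>2 + 2*0*y))) \<partial>lborel)"
    by (subst nn_integral_cmult[symmetric]) (use assms in \<open>auto simp: ennreal_mult\<close>)
  also have "\<dots> = ennreal (K * sqrt (pi/P))"
    using gauss1[OF assms(1), of 0] assms by (simp add: ennreal_mult)
  finally show ?thesis using assms by (simp add: ennreal_power)
qed

lemma exp_density_int: "l > 0 \<Longrightarrow> (\<integral>\<^sup>+t. ennreal (exponential_density l t) \<partial>lborel) = 1"
proof -
  assume l: "l > 0"
  interpret prob_space "density lborel (exponential_density l)"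
    by (rule prob_space_exponential_density[OF l])
  have "emeasure (density lborel (exponential_density l)) UNIV = 1"
    using emeasure_space_1 by simp
  then show ?thesis by (simp add: emeasure_density)
qed

lemma pow_exp_bound:
  fixes x t lam :: real
  assumes x: "x > 0" and t: "t \<ge> 0" and lam: "lam > 0"
  shows "t powr x \<le> (x/(lam*exp 1)) powr x * exp (lam*t)"
proof (cases "t = 0")
  case True then show ?thesis by simp
next
  case False
  then have tp: "t > 0" using t by simp
  have "ln (lam*t/x) \<le> lam*t/x - 1" by (rule ln_le_minus_one) (use tp x lam in simp)
  then have "x * ln (lam*t/x) \<le> lam*t - x" using x by (simp add: field_simps)
  moreover have "ln (lam*t/x) = ln t - (ln (x/lam))" using tp x lam by (simp add: ln_div ln_mult)
  ultimately have "x * ln t \<le> x * (ln (x/lam) - 1) + lam * t" by (simp add: algebra_simps)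
  moreover have "ln (x/(lam*exp 1)) = ln (x/lam) - 1" using x lam by (simp add: ln_div ln_mult)
  ultimately have "x * ln t \<le> x * ln (x/(lam*exp 1)) + lam * t" by simp
  then have "exp (x * ln t) \<le> exp (x * ln (x/(lam*exp 1)) + lam * t)" by simp
  then show ?thesis using tp x lam by (simp add: powr_def exp_add)
qed

lemma Gamma_upper:
  fixes x lam :: real
  assumes x: "x > 0" and lam: "0 < lam" "lam < 1"
  shows "Gamma (x+1) \<le> (x/(lam*exp 1)) powr x / (1 - lam)"
proof -
  define C where "C = (x/(lam*exp 1)) powr x"
  have C0: "C \<ge> 0" by (simp add: C_def)
  have "ennreal (Gamma (x+1)) = (\<integral>\<^sup>+t. ennreal (indicator {0..} t * t powr x / exp t) \<partial>lborel)"
    using Gamma_conv_nn_integral_real[of "x+1"] x by simp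
  also have "\<dots> \<le> (\<integral>\<^sup>+t. ennreal (C/(1-lam) * exponential_density (1-lam) t) \<partial>lborel)"
  proof (rule nn_integral_mono)
    fix t :: real
    show "ennreal (indicator {0..} t * t powr x / exp t) \<le> ennreal (C/(1-lam) * exponential_density (1-lam) t)"
    proof (cases "t \<ge> 0")
      case True
      have "t powr x \<le> C * exp (lam*t)" unfolding C_def by (rule pow_exp_bound) (use x True lam in auto)
      then have "t powr x / exp t \<le> C * exp (lam*t) / exp t" by (simp add: divide_right_mono)
      also have "C * exp (lam*t) / exp t = C/(1-lam) * ((1-lam) * exp (- t * (1-lam)))"
        using lam by (simp add: field_simps exp_diff[symmetric] exp_add[symmetric] exp_minus)
      finally have "t powr x / exp t \<le> C / (1 - lam) * exponential_density (1-lam) t"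
        using True by (simp add: exponential_density_def)
      then show ?thesis using True by (simp add: ennreal_leI)
    qed (simp add: exponential_density_def)
  qed
  also have "\<dots> = ennreal (C/(1-lam)) * (\<integral>\<^sup>+t. ennreal (exponential_density (1-lam) t) \<partial>lborel)"
  proof -
    have "(\<integral>\<^sup>+t. ennreal (C/(1-lam) * exponential_density (1-lam) t) \<partial>lborel)
       = (\<integral>\<^sup>+t. ennreal (C/(1-lam)) * ennreal (exponential_density (1-lam) t) \<partial>lborel)"
      by (rule nn_integral_cong, rule ennreal_mult) (use C0 lam in \<open>auto simp: exponential_density_def\<close>)
    then show ?thesis by (simp add: nn_integral_cmult)
  qed
  also have "\<dots> = ennreal (C/(1-lam))" using exp_density_int[of "1-lam"] lam by simp
  finally show ?thesis using C0 lam unfolding C_def by (simp add: ennreal_le_iff)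
qed

lemma eucl_norm_meas[measurable]: "eucl_norm n \<in> borel_measurable (Rspace n)"
  unfolding eucl_norm_def by measurable

lemma eucl_norm_meas2[measurable]: "(\<lambda>x. eucl_norm n (\<lambda>i. y i + x i)) \<in> borel_measurable (Rspace n)"
  unfolding eucl_norm_def by measurable

lemma test: "(\<lambda>x. ennreal (exp (a * (eucl_norm n x)\<^sup>2))) \<in> borel_measurable (Rspace n)"
  by measurable

lemma eucl_norm_nonneg: "eucl_norm n x \<ge> 0"
  unfolding eucl_norm_def by (simp add: sum_nonneg)

lemma single_le_suminf_ennreal: "(f k :: ennreal) \<le> (\<Sum>i. f i)"
  using sum_le_suminf[of f "{k}"] by simp

lemma pointwise_bound:
  fixes s R q c :: real and n :: nat
  assumes s: "s \<ge> 0" and R: "R > 0" and q: "q > 1" and c: "c > 0"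
  shows "ennreal ((s^n + R^n) powr (-2*c))
     \<le> (\<Sum>k. ennreal ((R * q powr (real k - 1)) powr (-2*c*n) * exp (n/2 * (1 - s\<^sup>2 / (R * q^k)\<^sup>2))))"
proof -
  define g where "g k = (R * q powr (real k - 1)) powr (-2*c*n) * exp (n/2 * (1 - s\<^sup>2 / (R * q^k)\<^sup>2))" for k :: nat
  have key: "\<exists>k. (s^n + R^n) powr (-2*c) \<le> g k"
  proof (cases "s \<le> R")
    case True
    have "(s^n + R^n) powr (-2*c) \<le> (R^n) powr (-2*c)"
      by (rule powr_mono2') (use R c s in auto)
    also have "(R^n) powr (-2*c) = R powr (-2*c*n)"
      using R by (simp add: powr_realpow[symmetric] powr_powr mult.commute)
    also have "\<dots> \<le> (R * q powr (real 0 - 1)) powr (-2*c*n)"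
    proof (rule powr_mono2')
      show "0 < R * q powr (real 0 - 1)" using R q by simp
      have "q powr (real 0 - 1) \<le> 1" using q by (simp add: powr_minus field_simps)
      then show "R * q powr (real 0 - 1) \<le> R" using R by (metis mult.right_neutral mult_left_mono less_imp_le)
    qed (use c in auto)
    also have "\<dots> \<le> g 0"
    proof -
      have "s\<^sup>2 / (R * q^0)\<^sup>2 \<le> 1" using True s R by (simp add: power_mono divide_le_eq_1)
      then have "1 \<le> exp (n/2 * (1 - s\<^sup>2 / (R * q^0)\<^sup>2))" by simp
      moreover have "0 \<le> (R * q powr (real 0 - 1)) powr (-2*c*n)" by simp
      ultimately show ?thesis unfolding g_def by (simp add: mult_le_cancel_left1)
    qed
    finally show ?thesis by blast
  next
    case False
    then have sR: "s > R" by simp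
    define t where "t = ln (s/R) / ln q"
    have lnq: "ln q > 0" using q by simp
    have tpos: "t > 0" using sR R lnq by (simp add: t_def)
    define k where "k = nat \<lceil>t\<rceil>"
    have kt: "real k \<ge> t" "real k - 1 < t" using tpos by (auto simp: k_def) linarith
    have qt: "q powr t = s/R" using q sR R by (simp add: t_def powr_def)
    have up: "s \<le> R * q^k"
    proof -
      have "q powr t \<le> q powr (real k)" using kt q by simp
      then have "s/R \<le> q^k" using qt q by (simp add: powr_realpow)
      then show ?thesis using R by (simp add: field_simps)
    qed
    have lo: "R * q powr (real k - 1) < s"
    proof -
      have "q powr (real k - 1) < q powr t" using kt q by simp
      then show ?thesis using qt R by (simp add: field_simps)
    qed
    have "(s^n + R^n) powr (-2*c) \<le> (s^n) powr (-2*c)"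
      by (rule powr_mono2') (use R c sR in auto)
    also have "(s^n) powr (-2*c) = s powr (-2*c*n)"
      using sR R by (simp add: powr_realpow[symmetric] powr_powr mult.commute)
    also have "\<dots> \<le> (R * q powr (real k - 1)) powr (-2*c*n)"
      by (rule powr_mono2') (use R c lo q in auto)
    also have "\<dots> \<le> g k"
    proof -
      have "s\<^sup>2 / (R * q^k)\<^sup>2 \<le> 1" using up s R q by (simp add: power_mono divide_le_eq_1)
      then have "1 \<le> exp (n/2 * (1 - s\<^sup>2 / (R * q^k)\<^sup>2))" by simp
      moreover have "0 \<le> (R * q powr (real k - 1)) powr (-2*c*n)" by simp
      ultimately show ?thesis unfolding g_def by (simp add: mult_le_cancel_left1)
    qed
    finally show ?thesis by blast
  qed
  then obtain k where "(s^n + R^n) powr (-2*c) \<le> g k" by blast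
  then have "ennreal ((s^n + R^n) powr (-2*c)) \<le> ennreal (g k)" by (rule ennreal_leI)
  also have "\<dots> \<le> (\<Sum>k. ennreal (g k))" by (rule single_le_suminf_ennreal)
  finally show ?thesis unfolding g_def .
qed

lemma suminf3:
  fixes f g h :: "nat \<Rightarrow> ennreal"
  shows "(\<Sum>i. f i) * (\<Sum>j. g j) * (\<Sum>k. h k) = (\<Sum>i. \<Sum>j. \<Sum>k. f i * g j * h k)"
proof -
  have "(\<Sum>i. f i) * (\<Sum>j. g j) * (\<Sum>k. h k) = (\<Sum>i. f i * ((\<Sum>j. g j) * (\<Sum>k. h k)))"
    by (simp add: mult.assoc)
  also have "\<dots> = (\<Sum>i. f i * (\<Sum>j. g j * (\<Sum>k. h k)))" by simp
  also have "\<dots> = (\<Sum>i. (\<Sum>j. f i * (g j * (\<Sum>k. h k))))" by simp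
  also have "\<dots> = (\<Sum>i. \<Sum>j. \<Sum>k. f i * g j * h k)" by (simp add: mult.assoc)
  finally show ?thesis .
qed

lemma amgm3:
  fixes X Y Z :: real
  assumes "X \<ge> 0" "Y \<ge> 0" "Z \<ge> 0"
  shows "3 * (X*Y*Z) \<le> X^3 + Y^3 + Z^3"
proof -
  have "X^3 + Y^3 + Z^3 - 3*(X*Y*Z) = (X+Y+Z) * ((X-Y)\<^sup>2 + (Y-Z)\<^sup>2 + (Z-X)\<^sup>2) / 2"
    by (simp add: algebra_simps power2_eq_square power3_eq_cube)
  also have "\<dots> \<ge> 0" using assms by simp
  finally show ?thesis by simp
qed

lemma term_inner:
  fixes a b c C :: real and s :: "nat \<Rightarrow> real"
  assumes "b + c > 0" "C \<ge> 0"
  shows "(\<integral>\<^sup>+x2. ennreal (C * (\<Prod>i<n. exp (-(a*(s i)\<^sup>2 + b*(x2 i)\<^sup>2 + c*(s i + x2 i)\<^sup>2)))) \<partial>Rspace n)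
     = ennreal C * ennreal (\<Prod>i<n. sqrt (pi/(b+c)) * exp (-((a*b+b*c+c*a)/(b+c)) * (s i)\<^sup>2))"
proof -
  have "(\<integral>\<^sup>+x2. ennreal (C * (\<Prod>i<n. exp (-(a*(s i)\<^sup>2 + b*(x2 i)\<^sup>2 + c*(s i + x2 i)\<^sup>2)))) \<partial>Rspace n)
    = (\<integral>\<^sup>+x2. ennreal C * ennreal (\<Prod>i<n. exp (-(a*(s i)\<^sup>2 + b*(x2 i)\<^sup>2 + c*(s i + x2 i)\<^sup>2))) \<partial>Rspace n)"
    by (rule nn_integral_cong, rule ennreal_mult) (use assms in \<open>auto intro: prod_nonneg\<close>)
  also have "\<dots> = ennreal C * (\<integral>\<^sup>+x2. ennreal (\<Prod>i<n. exp (-(a*(s i)\<^sup>2 + b*(x2 i)\<^sup>2 + c*(s i + x2 i)\<^sup>2))) \<partial>Rspace n)"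
    by (rule nn_integral_cmult) measurable
  finally show ?thesis using gaussN_inner[OF assms(1)] by simp
qed

lemma term_outer:
  fixes a b c C :: real
  assumes "a > 0" "b > 0" "c > 0" "C \<ge> 0"
  shows "(\<integral>\<^sup>+x1. ennreal C * ennreal (\<Prod>i<n. sqrt (pi/(b+c)) * exp (-((a*b+b*c+c*a)/(b+c)) * (x1 i)\<^sup>2)) \<partial>Rspace n)
     = ennreal (C * (pi / sqrt (a*b+b*c+c*a))^n)"
proof -
  define P where "P = (a*b+b*c+c*a)/(b+c)"
  have P: "P > 0" using assms unfolding P_def by (intro divide_pos_pos add_pos_pos mult_pos_pos)
  have "(\<integral>\<^sup>+x1. ennreal C * ennreal (\<Prod>i<n. sqrt (pi/(b+c)) * exp (-P * (x1 i)\<^sup>2)) \<partial>Rspace n)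
     = ennreal C * (\<integral>\<^sup>+x1. ennreal (\<Prod>i<n. sqrt (pi/(b+c)) * exp (-P * (x1 i)\<^sup>2)) \<partial>Rspace n)"
    by (rule nn_integral_cmult) measurable
  also have "\<dots> = ennreal C * ennreal ((sqrt (pi/(b+c)) * sqrt (pi/P))^n)"
    using gaussN_outer[OF P, of "sqrt (pi/(b+c))"] assms by simp
  also have "sqrt (pi/(b+c)) * sqrt (pi/P) = pi / sqrt (a*b+b*c+c*a)"
  proof -
    have "sqrt (pi/(b+c)) * sqrt (pi/P) = sqrt (pi/(b+c) * (pi/P))" by (simp only: real_sqrt_mult)
    also have "pi/(b+c) * (pi/P) = pi\<^sup>2 / (a*b+b*c+c*a)"
    proof -
      have bc: "b + c \<noteq> 0" using assms by simp
      have "pi/P = pi*(b+c)/(a*b+b*c+c*a)" by (simp add: P_def)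
      then show ?thesis using bc by (simp add: power2_eq_square)
    qed
    also have "sqrt \<dots> = pi / sqrt (a*b+b*c+c*a)" by (simp add: real_sqrt_divide)
    finally show ?thesis .
  qed
  finally show ?thesis unfolding P_def using assms by (simp add: ennreal_mult[symmetric])
qed

lemma term_real_bound:
  fixes \<beta> R q c m :: real and k1 k2 k3 :: nat
  assumes \<beta>: "\<beta> > 0" and R: "R > 0" and q: "q > 1" and m: "m \<ge> 0"
  defines "\<alpha> \<equiv> \<lambda>k::nat. \<beta> * q powr (-2*real k)"
  defines "a \<equiv> \<lambda>k::nat. (R * q powr (real k - 1)) powr (-2*c*m)"
  shows "a k1 * a k2 * a k3 * exp (3*m/2) * (pi / sqrt (\<alpha> k1 * \<alpha> k2 + \<alpha> k2 * \<alpha> k3 + \<alpha> k3 * \<alpha> k1)) powr m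
    \<le> R powr (-6*c*m) * exp (3*m/2) * (pi/(sqrt 3 * \<beta>)) powr m * q powr (6*c*m)
       * (q powr (-(2*c-2/3)*m))^k1 * (q powr (-(2*c-2/3)*m))^k2 * (q powr (-(2*c-2/3)*m))^k3"
proof -
  define K where "K = real k1 + real k2 + real k3"
  define S where "S = \<alpha> k1 * \<alpha> k2 + \<alpha> k2 * \<alpha> k3 + \<alpha> k3 * \<alpha> k1"
  have q0: "q > 0" "q \<noteq> 0" using q by auto
  define X where "X = q powr (-2*(real k1 + real k2)/3)"
  define Y where "Y = q powr (-2*(real k2 + real k3)/3)"
  define Z where "Z = q powr (-2*(real k3 + real k1)/3)"
  have cube: "(q powr (-2*(real i + real j)/3))^3 = q powr (-2*real i) * q powr (-2*real j)" for i j :: nat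
  proof -
    have "(q powr (-2*(real i + real j)/3))^3 = q powr (of_nat 3 * (-2*(real i + real j)/3))"
      by (rule powr_power[OF q0(2)])
    also have "of_nat 3 * (-2*(real i + real j)/3) = -2*real i + -2*real j" by simp
    finally show ?thesis by (simp only: powr_add)
  qed
  have X3: "\<alpha> k1 * \<alpha> k2 = \<beta>\<^sup>2 * X^3"
    unfolding X_def cube \<alpha>_def by (simp add: power2_eq_square)
  have Y3: "\<alpha> k2 * \<alpha> k3 = \<beta>\<^sup>2 * Y^3"
    unfolding Y_def cube \<alpha>_def by (simp add: power2_eq_square)
  have Z3: "\<alpha> k3 * \<alpha> k1 = \<beta>\<^sup>2 * Z^3"
    unfolding Z_def cube \<alpha>_def by (simp add: power2_eq_square)
  have XYZ: "X * Y * Z = (q powr (-2*K/3))\<^sup>2"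
  proof -
    have "X * Y * Z = q powr (-2*(real k1 + real k2)/3 + -2*(real k2 + real k3)/3 + -2*(real k3 + real k1)/3)"
      unfolding X_def Y_def Z_def by (simp add: powr_add)
    also have "-2*(real k1 + real k2)/3 + -2*(real k2 + real k3)/3 + -2*(real k3 + real k1)/3 = -2*K/3 + -2*K/3"
      unfolding K_def by (simp add: field_simps)
    finally show ?thesis by (simp only: powr_add power2_eq_square)
  qed
  have "3 * (X*Y*Z) \<le> X^3 + Y^3 + Z^3" by (rule amgm3) (auto simp: X_def Y_def Z_def)
  then have "3 * \<beta>\<^sup>2 * (q powr (-2*K/3))\<^sup>2 \<le> S"
  proof -
    assume h: "3 * (X*Y*Z) \<le> X^3 + Y^3 + Z^3"
    have "\<beta>\<^sup>2 * (3 * (X*Y*Z)) \<le> \<beta>\<^sup>2 * (X^3 + Y^3 + Z^3)" by (rule mult_left_mono[OF h]) simp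
    then show ?thesis unfolding S_def X3 Y3 Z3 XYZ[symmetric] by (simp add: algebra_simps)
  qed
  then have "sqrt (3 * \<beta>\<^sup>2 * (q powr (-2*K/3))\<^sup>2) \<le> sqrt S" by (rule real_sqrt_le_mono)
  then have c1: "sqrt 3 * \<beta> * q powr (-2*K/3) \<le> sqrt S"
    using \<beta> by (simp add: real_sqrt_mult)
  have pos1: "sqrt 3 * \<beta> * q powr (-2*K/3) > 0" using \<beta> q0 by simp
  have Spos: "S > 0" using pos1 c1 by (smt (verit) real_sqrt_le_0_iff)
  have c2: "pi / sqrt S \<le> pi/(sqrt 3 * \<beta>) * q powr (2*K/3)"
  proof -
    have "pi / sqrt S \<le> pi / (sqrt 3 * \<beta> * q powr (-2*K/3))"
      by (rule divide_left_mono[OF c1]) (use pos1 c1 Spos in \<open>auto intro!: mult_pos_pos\<close>)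
    also have "\<dots> = pi/(sqrt 3 * \<beta>) * q powr (2*K/3)"
      by (simp add: powr_minus divide_simps)
    finally show ?thesis .
  qed
  have c3: "(pi / sqrt S) powr m \<le> (pi/(sqrt 3 * \<beta>)) powr m * q powr (2*K*m/3)"
  proof -
    have "(pi / sqrt S) powr m \<le> (pi/(sqrt 3 * \<beta>) * q powr (2*K/3)) powr m"
      by (rule powr_mono2[OF m _ c2]) (use Spos in simp)
    also have "\<dots> = (pi/(sqrt 3 * \<beta>)) powr m * q powr (2*K*m/3)"
    proof -
      have "(pi/(sqrt 3 * \<beta>) * q powr (2*K/3)) powr m = (pi/(sqrt 3 * \<beta>)) powr m * (q powr (2*K/3)) powr m"
        by (rule powr_mult)
      also have "(q powr (2*K/3)) powr m = q powr (2*K*m/3)" by (simp add: powr_powr)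
      finally show ?thesis .
    qed
    finally show ?thesis .
  qed
  have c4: "a k1 * a k2 * a k3 = R powr (-6*c*m) * q powr (-2*c*m*(K-3))"
    unfolding a_def K_def using R q0
    by (simp add: powr_mult powr_powr powr_add[symmetric] algebra_simps)
  have c5: "(q powr (-(2*c-2/3)*m))^k1 * (q powr (-(2*c-2/3)*m))^k2 * (q powr (-(2*c-2/3)*m))^k3
      = q powr (-(2*c-2/3)*m*K)"
  proof -
    have "(q powr (-(2*c-2/3)*m))^k1 * (q powr (-(2*c-2/3)*m))^k2 * (q powr (-(2*c-2/3)*m))^k3
      = q powr (real k1 * (-(2*c-2/3)*m) + real k2 * (-(2*c-2/3)*m) + real k3 * (-(2*c-2/3)*m))"
      by (simp only: powr_power[OF q0(2)] powr_add)
    also have "real k1 * (-(2*c-2/3)*m) + real k2 * (-(2*c-2/3)*m) + real k3 * (-(2*c-2/3)*m) = -(2*c-2/3)*m*K"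
      unfolding K_def by (simp add: algebra_simps)
    finally show ?thesis .
  qed
  have "a k1 * a k2 * a k3 * exp (3*m/2) * (pi / sqrt S) powr m
      \<le> a k1 * a k2 * a k3 * exp (3*m/2) * ((pi/(sqrt 3 * \<beta>)) powr m * q powr (2*K*m/3))"
    by (rule mult_left_mono[OF c3]) (simp add: a_def)
  also have "\<dots> = R powr (-6*c*m) * exp (3*m/2) * (pi/(sqrt 3 * \<beta>)) powr m * (q powr (-2*c*m*(K-3)) * q powr (2*K*m/3))"
    unfolding c4 by (simp add: algebra_simps)
  also have "q powr (-2*c*m*(K-3)) * q powr (2*K*m/3) = q powr (6*c*m) * q powr (-(2*c-2/3)*m*K)"
    by (simp add: powr_add[symmetric] algebra_simps)
  finally show ?thesis unfolding S_def c5[symmetric] by (simp add: algebra_simps)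
qed

lemma E_identity:
  fixes R q :: real and n k :: nat and x :: "nat \<Rightarrow> real"
  assumes R: "R > 0" and q: "q > 1"
  shows "exp (real n/2 * (1 - (eucl_norm n x)\<^sup>2/(R*q^k)\<^sup>2))
       = exp (real n/2) * exp (-((real n/(2*R\<^sup>2)) * q powr (-2*real k) * (\<Sum>i<n. (x i)\<^sup>2)))"
proof -
  have N: "(eucl_norm n x)\<^sup>2 = (\<Sum>i<n. (x i)\<^sup>2)" unfolding eucl_norm_def by (simp add: sum_nonneg)
  have Q: "q powr (-2*real k) = 1 / (q^k)\<^sup>2"
    using q by (simp add: powr_minus powr_realpow[symmetric] powr_powr[symmetric] power2_eq_square powr_add[symmetric] divide_inverse)
  have "real n/2 * (1 - (eucl_norm n x)\<^sup>2/(R*q^k)\<^sup>2) = real n/2 + -((real n/(2*R\<^sup>2)) * q powr (-2*real k) * (\<Sum>i<n. (x i)\<^sup>2))"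
    unfolding N Q using R q by (simp add: field_simps power_mult_distrib)
  then show ?thesis by (simp only: exp_add)
qed

lemma prod_g:
  fixes R q c :: real and n k1 k2 k3 :: nat and x1 x2 :: "nat \<Rightarrow> real"
  assumes R: "R > 0" and q: "q > 1"
  defines "\<alpha> \<equiv> \<lambda>k::nat. (real n/(2*R\<^sup>2)) * q powr (-2*real k)"
  defines "a \<equiv> \<lambda>k::nat. (R * q powr (real k - 1)) powr (-2*c*real n)"
  defines "g \<equiv> \<lambda>k x. ennreal (a k * exp (real n/2 * (1 - (eucl_norm n x)\<^sup>2/(R*q^k)\<^sup>2)))"
  shows "g k1 x1 * g k2 x2 * g k3 (\<lambda>i. x1 i + x2 i) =
    ennreal (a k1 * a k2 * a k3 * exp (3*real n/2) *
      (\<Prod>i<n. exp (-(\<alpha> k1*(x1 i)\<^sup>2 + \<alpha> k2*(x2 i)\<^sup>2 + \<alpha> k3*(x1 i + x2 i)\<^sup>2))))"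
proof -
  have a0: "a k \<ge> 0" for k unfolding a_def by simp
  have E: "exp (real n/2 * (1 - (eucl_norm n x)\<^sup>2/(R*q^k)\<^sup>2)) = exp (real n/2) * exp (-(\<alpha> k * (\<Sum>i<n. (x i)\<^sup>2)))" for k x
    unfolding \<alpha>_def by (rule E_identity[OF R q])
  have "g k1 x1 * g k2 x2 * g k3 (\<lambda>i. x1 i + x2 i) =
     ennreal (a k1 * exp (real n/2 * (1 - (eucl_norm n x1)\<^sup>2/(R*q^k1)\<^sup>2)) *
              (a k2 * exp (real n/2 * (1 - (eucl_norm n x2)\<^sup>2/(R*q^k2)\<^sup>2))) *
              (a k3 * exp (real n/2 * (1 - (eucl_norm n (\<lambda>i. x1 i + x2 i))\<^sup>2/(R*q^k3)\<^sup>2))))"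
    unfolding g_def using a0 by (simp add: ennreal_mult)
  also have "a k1 * exp (real n/2 * (1 - (eucl_norm n x1)\<^sup>2/(R*q^k1)\<^sup>2)) *
              (a k2 * exp (real n/2 * (1 - (eucl_norm n x2)\<^sup>2/(R*q^k2)\<^sup>2))) *
              (a k3 * exp (real n/2 * (1 - (eucl_norm n (\<lambda>i. x1 i + x2 i))\<^sup>2/(R*q^k3)\<^sup>2)))
    = a k1 * a k2 * a k3 * exp (3*real n/2) *
      (\<Prod>i<n. exp (-(\<alpha> k1*(x1 i)\<^sup>2 + \<alpha> k2*(x2 i)\<^sup>2 + \<alpha> k3*(x1 i + x2 i)\<^sup>2)))"
  proof -
    have "(\<Prod>i<n. exp (-(\<alpha> k1*(x1 i)\<^sup>2 + \<alpha> k2*(x2 i)\<^sup>2 + \<alpha> k3*(x1 i + x2 i)\<^sup>2)))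
       = exp (\<Sum>i<n. -(\<alpha> k1*(x1 i)\<^sup>2 + \<alpha> k2*(x2 i)\<^sup>2 + \<alpha> k3*(x1 i + x2 i)\<^sup>2))"
      by (simp add: exp_sum)
    also have "(\<Sum>i<n. -(\<alpha> k1*(x1 i)\<^sup>2 + \<alpha> k2*(x2 i)\<^sup>2 + \<alpha> k3*(x1 i + x2 i)\<^sup>2))
       = -(\<alpha> k1 * (\<Sum>i<n. (x1 i)\<^sup>2)) + -(\<alpha> k2 * (\<Sum>i<n. (x2 i)\<^sup>2)) + -(\<alpha> k3 * (\<Sum>i<n. (x1 i + x2 i)\<^sup>2))"
      by (simp add: sum_distrib_left sum_subtractf sum_negf)
    finally have P: "(\<Prod>i<n. exp (-(\<alpha> k1*(x1 i)\<^sup>2 + \<alpha> k2*(x2 i)\<^sup>2 + \<alpha> k3*(x1 i + x2 i)\<^sup>2)))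
       = exp (-(\<alpha> k1 * (\<Sum>i<n. (x1 i)\<^sup>2))) * exp (-(\<alpha> k2 * (\<Sum>i<n. (x2 i)\<^sup>2))) * exp (-(\<alpha> k3 * (\<Sum>i<n. (x1 i + x2 i)\<^sup>2)))"
      by (simp only: exp_add)
    have e3: "exp (3*real n/2) = exp (real n/2) * exp (real n/2) * exp (real n/2)"
      by (simp only: exp_add[symmetric]) simp
    show ?thesis unfolding P E e3 by (simp add: algebra_simps)
  qed
  finally show ?thesis .
qed

lemma triple_bound:
  fixes R q c :: real and n :: nat
  assumes R: "R > 0" and q: "q > 1" and c: "c > 1/3" and n: "n \<ge> 1" and D: "D \<ge> 0"
  shows "(\<integral>\<^sup>+x1. \<integral>\<^sup>+x2. ennreal D * (ennreal ((eucl_norm n x1 ^ n + R^n) powr (-2*c)) * ennreal ((eucl_norm n x2 ^ n + R^n) powr (-2*c))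
            * ennreal ((eucl_norm n (\<lambda>i. x1 i + x2 i) ^ n + R^n) powr (-2*c))) \<partial>Rspace n \<partial>Rspace n)
     \<le> ennreal (D * R powr (-6*c*real n) * exp (3*real n/2) * (pi/(sqrt 3 * (real n/(2*R\<^sup>2)))) powr real n
           * q powr (6*c*real n) / (1 - q powr (-(2*c-2/3)))^3)"
proof -
  define \<beta> where "\<beta> = real n/(2*R\<^sup>2)"
  have \<beta>: "\<beta> > 0" using n R by (simp add: \<beta>_def)
  define \<alpha> where "\<alpha> k = \<beta> * q powr (-2*real k)" for k::nat
  have \<alpha>: "\<alpha> k > 0" for k using \<beta> q by (simp add: \<alpha>_def)
  define a where "a k = (R * q powr (real k - 1)) powr (-2*c*real n)" for k::nat
  define g where "g k x = ennreal (a k * exp (real n/2 * (1 - (eucl_norm n x)\<^sup>2/(R*q^k)\<^sup>2)))" for k x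
  define C where "C k1 k2 k3 = D * (a k1 * a k2 * a k3 * exp (3*real n/2))" for k1 k2 k3
  have C0: "C k1 k2 k3 \<ge> 0" for k1 k2 k3 using D by (simp add: C_def a_def)
  define \<Phi> where "\<Phi> k1 k2 k3 x1 x2 = ennreal (C k1 k2 k3 *
      (\<Prod>i<n. exp (-(\<alpha> k1*(x1 i)\<^sup>2 + \<alpha> k2*(x2 i)\<^sup>2 + \<alpha> k3*(x1 i + x2 i)\<^sup>2))))" for k1 k2 k3 x1 x2
  define \<Psi> where "\<Psi> k1 k2 k3 x1 = ennreal (C k1 k2 k3) * ennreal (\<Prod>i<n. sqrt (pi/(\<alpha> k2+\<alpha> k3))
      * exp (-((\<alpha> k1*\<alpha> k2+\<alpha> k2*\<alpha> k3+\<alpha> k3*\<alpha> k1)/(\<alpha> k2+\<alpha> k3)) * (x1 i)\<^sup>2))" for k1 k2 k3 x1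
  define u where "u = q powr (-(2*c-2/3)*real n)"
  define u1 where "u1 = q powr (-(2*c-2/3))"
  define Z where "Z = D * R powr (-6*c*real n) * exp (3*real n/2) * (pi/(sqrt 3 * \<beta>)) powr real n * q powr (6*c*real n)"
  have Z0: "Z \<ge> 0" using D by (simp add: Z_def)
  have e1: "-(2*c-2/3) < 0" using c by simp
  have e2: "-(2*c-2/3)*real n \<le> -(2*c-2/3)"
  proof -
    have "(2*c-2/3)*1 \<le> (2*c-2/3)*real n" using c n by (intro mult_left_mono) auto
    then show ?thesis by (simp add: algebra_simps)
  qed
  have e3: "-(2*c-2/3)*real n < 0" using e1 e2 by linarith
  have u0: "u > 0" "u < 1" using q powr_less_one[OF q e3] unfolding u_def by auto
  have u1: "u \<le> u1" "u1 < 1" unfolding u_def u1_def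
    using powr_mono[OF e2, of q] q powr_less_one[OF q e1] by auto
  have pw: "ennreal ((eucl_norm n x ^ n + R^n) powr (-2*c)) \<le> (\<Sum>k. g k x)" for x
  proof -
    have c0: "c > 0" using c by simp
    show ?thesis unfolding g_def a_def by (rule pointwise_bound[OF eucl_norm_nonneg R q c0])
  qed
  have pg: "ennreal D * (g k1 x1 * g k2 x2 * g k3 (\<lambda>i. x1 i + x2 i)) = \<Phi> k1 k2 k3 x1 x2" for k1 k2 k3 x1 x2
  proof -
    have "g k1 x1 * g k2 x2 * g k3 (\<lambda>i. x1 i + x2 i) = ennreal (a k1 * a k2 * a k3 * exp (3*real n/2) *
      (\<Prod>i<n. exp (-(\<alpha> k1*(x1 i)\<^sup>2 + \<alpha> k2*(x2 i)\<^sup>2 + \<alpha> k3*(x1 i + x2 i)\<^sup>2))))"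
      unfolding g_def \<alpha>_def \<beta>_def a_def by (rule prod_g[OF R q])
    moreover have "0 \<le> a k1 * a k2 * a k3 * exp (3*real n/2) *
      (\<Prod>i<n. exp (-(\<alpha> k1*(x1 i)\<^sup>2 + \<alpha> k2*(x2 i)\<^sup>2 + \<alpha> k3*(x1 i + x2 i)\<^sup>2)))"
      by (simp add: a_def prod_nonneg)
    ultimately show ?thesis unfolding \<Phi>_def C_def using D by (simp add: ennreal_mult[symmetric] mult.assoc)
  qed
  have \<Phi>m[measurable]: "\<Phi> k1 k2 k3 x1 \<in> borel_measurable (Rspace n)" for k1 k2 k3 x1
    unfolding \<Phi>_def by measurable
  have \<Psi>m[measurable]: "\<Psi> k1 k2 k3 \<in> borel_measurable (Rspace n)" for k1 k2 k3
    unfolding \<Psi>_def by measurable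
  have inner: "(\<integral>\<^sup>+x2. \<Phi> k1 k2 k3 x1 x2 \<partial>Rspace n) = \<Psi> k1 k2 k3 x1" for k1 k2 k3 x1
    unfolding \<Phi>_def \<Psi>_def by (rule term_inner) (use \<alpha> C0 in \<open>auto intro: add_pos_pos\<close>)
  have outer: "(\<integral>\<^sup>+x1. \<Psi> k1 k2 k3 x1 \<partial>Rspace n) = ennreal (C k1 k2 k3 * (pi / sqrt (\<alpha> k1*\<alpha> k2+\<alpha> k2*\<alpha> k3+\<alpha> k3*\<alpha> k1))^n)" for k1 k2 k3
    unfolding \<Psi>_def by (rule term_outer) (use \<alpha> C0 in auto)
  have tb: "C k1 k2 k3 * (pi / sqrt (\<alpha> k1*\<alpha> k2+\<alpha> k2*\<alpha> k3+\<alpha> k3*\<alpha> k1))^n \<le> Z * u^k1 * u^k2 * u^k3" for k1 k2 k3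
  proof -
    have S: "\<alpha> k1*\<alpha> k2+\<alpha> k2*\<alpha> k3+\<alpha> k3*\<alpha> k1 > 0" using \<alpha> by (intro add_pos_pos mult_pos_pos)
    have "(pi / sqrt (\<alpha> k1*\<alpha> k2+\<alpha> k2*\<alpha> k3+\<alpha> k3*\<alpha> k1))^n = (pi / sqrt (\<alpha> k1*\<alpha> k2+\<alpha> k2*\<alpha> k3+\<alpha> k3*\<alpha> k1)) powr real n"
      using S by (simp add: powr_realpow)
    then show ?thesis
      using mult_left_mono[OF term_real_bound[OF \<beta> R q, of "real n" k1 c k2 k3] D] unfolding C_def Z_def u_def \<alpha>_def a_def
      by (simp add: mult.assoc)
  qed
  have "(\<integral>\<^sup>+x1. \<integral>\<^sup>+x2. ennreal D * (ennreal ((eucl_norm n x1 ^ n + R^n) powr (-2*c)) * ennreal ((eucl_norm n x2 ^ n + R^n) powr (-2*c))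
            * ennreal ((eucl_norm n (\<lambda>i. x1 i + x2 i) ^ n + R^n) powr (-2*c))) \<partial>Rspace n \<partial>Rspace n)
     \<le> (\<integral>\<^sup>+x1. \<integral>\<^sup>+x2. ennreal D * ((\<Sum>k. g k x1) * (\<Sum>k. g k x2) * (\<Sum>k. g k (\<lambda>i. x1 i + x2 i))) \<partial>Rspace n \<partial>Rspace n)"
    by (intro nn_integral_mono mult_mono pw mult_left_mono) auto
  also have "\<dots> = (\<integral>\<^sup>+x1. \<integral>\<^sup>+x2. (\<Sum>k1. \<Sum>k2. \<Sum>k3. \<Phi> k1 k2 k3 x1 x2) \<partial>Rspace n \<partial>Rspace n)"
    by (simp only: suminf3) (simp only: ennreal_suminf_cmult[symmetric] pg)
  also have "\<dots> = (\<integral>\<^sup>+x1. (\<Sum>k1. \<Sum>k2. \<Sum>k3. \<integral>\<^sup>+x2. \<Phi> k1 k2 k3 x1 x2 \<partial>Rspace n) \<partial>Rspace n)"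
    by (simp add: nn_integral_suminf)
  also have "\<dots> = (\<integral>\<^sup>+x1. (\<Sum>k1. \<Sum>k2. \<Sum>k3. \<Psi> k1 k2 k3 x1) \<partial>Rspace n)"
    by (simp only: inner)
  also have "\<dots> = (\<Sum>k1. \<Sum>k2. \<Sum>k3. \<integral>\<^sup>+x1. \<Psi> k1 k2 k3 x1 \<partial>Rspace n)"
    by (simp add: nn_integral_suminf)
  also have "\<dots> = (\<Sum>k1. \<Sum>k2. \<Sum>k3. ennreal (C k1 k2 k3 * (pi / sqrt (\<alpha> k1*\<alpha> k2+\<alpha> k2*\<alpha> k3+\<alpha> k3*\<alpha> k1))^n))"
    by (simp only: outer)
  also have "\<dots> \<le> (\<Sum>k1. \<Sum>k2. \<Sum>k3. ennreal (Z * u^k1) * ennreal (u^k2) * ennreal (u^k3))"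
  proof (intro suminf_le summableI allI)
    fix k1 k2 k3
    show "ennreal (C k1 k2 k3 * (pi / sqrt (\<alpha> k1*\<alpha> k2+\<alpha> k2*\<alpha> k3+\<alpha> k3*\<alpha> k1))^n) \<le> ennreal (Z * u^k1) * ennreal (u^k2) * ennreal (u^k3)"
      using tb[of k1 k2 k3] Z0 u0 by (simp add: ennreal_mult[symmetric] ennreal_leI)
  qed
  also have "\<dots> = (\<Sum>k. ennreal (Z * u^k)) * (\<Sum>k. ennreal (u^k)) * (\<Sum>k. ennreal (u^k))"
    by (simp only: suminf3)
  also have "(\<Sum>k. ennreal (u^k)) = ennreal (1/(1-u))"
    using u0 by (subst suminf_ennreal2) (auto simp: suminf_geometric)
  also have "(\<Sum>k. ennreal (Z * u^k)) = ennreal (Z/(1-u))"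
  proof -
    have sg: "summable (\<lambda>k. u^k)" using u0 by (intro summable_geometric) simp
    have "(\<Sum>k. Z * u^k) = Z * (\<Sum>k. u^k)" by (rule suminf_mult[OF sg])
    also have "\<dots> = Z/(1-u)" using u0 by (simp add: suminf_geometric)
    finally have e: "(\<Sum>k. Z * u^k) = Z/(1-u)" .
    have "(\<Sum>k. ennreal (Z * u^k)) = ennreal (\<Sum>k. Z * u^k)"
      by (rule suminf_ennreal2) (use u0 Z0 sg in \<open>auto intro: summable_mult\<close>)
    then show ?thesis using e by simp
  qed
  also have "ennreal (Z/(1-u)) * ennreal (1/(1-u)) * ennreal (1/(1-u)) = ennreal (Z/(1-u)^3)"
    using u0 Z0 by (simp add: ennreal_mult[symmetric] power3_eq_cube)
  also have "\<dots> \<le> ennreal (Z/(1-u1)^3)"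
  proof (rule ennreal_leI, rule divide_left_mono[OF _ Z0])
    show "(1 - u1)^3 \<le> (1-u)^3" using u0 u1 by (intro power_mono) auto
    show "0 < (1 - u) ^ 3 * (1 - u1) ^ 3" using u0 u1 by simp
  qed
  finally show ?thesis unfolding Z_def u1_def \<beta>_def by simp
qed

lemma Vn_pos: "Vn n > 0"
  unfolding Vn_def by (intro divide_pos_pos) (auto intro!: Gamma_real_pos)

lemma Rn_pos: assumes "\<delta> > 0" shows "Rn n \<delta> > 0"
  unfolding Rn_def using assms Vn_pos[of n] by simp

lemma Rn_pow: assumes "\<delta> > 0" "n \<ge> 1" shows "Rn n \<delta> ^ n = \<delta> / Vn n"
proof -
  have "Rn n \<delta> ^ n = ((\<delta> / Vn n) powr (1/real n)) powr real n"
    unfolding Rn_def using assms Vn_pos[of n] by (simp add: powr_realpow)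
  also have "\<dots> = \<delta> / Vn n" using assms Vn_pos[of n] by (simp add: powr_powr)
  finally show ?thesis .
qed

lemma integrand_bound:
  fixes f1 f2 f3 M :: real and l1 l2 l3 :: nat
  assumes "0 \<le> f1" "f1 \<le> M" "0 \<le> f2" "f2 \<le> M" "0 \<le> f3" "f3 \<le> M" "l1 > 0" "l2 > 0" "l3 > 0"
  shows "f1^l1 * f2^l2 * f3^l3 \<le> M^(l1+l2+l3-3) * (f1 * f2 * f3)"
proof -
  have b: "f^l \<le> M^(l-1) * f" if "0 \<le> f" "f \<le> M" "l > 0" for f :: real and l :: nat
  proof -
    have "f^l = f^(l-1) * f" using that by (metis Suc_diff_1 power_Suc2)
    also have "\<dots> \<le> M^(l-1) * f" by (rule mult_right_mono[OF power_mono]) (use that in auto)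
    finally show ?thesis .
  qed
  have M0: "M \<ge> 0" using assms by linarith
  have "f1^l1 * f2^l2 * f3^l3 \<le> (M^(l1-1) * f1) * (M^(l2-1) * f2) * (M^(l3-1) * f3)"
    using assms M0 by (intro mult_mono b) (auto intro: mult_nonneg_nonneg)
  also have "\<dots> = M^(l1-1+(l2-1)+(l3-1)) * (f1 * f2 * f3)" by (simp add: power_add algebra_simps)
  also have "l1-1+(l2-1)+(l3-1) = l1+l2+l3-3" using assms by simp
  finally show ?thesis .
qed

lemma final_real:
  fixes \<delta> c lam q u1 :: real and n l :: nat
  assumes n: "n \<ge> 1" and \<delta>: "\<delta> > 0" and c: "c > 0" and l: "l \<ge> 3"
    and lam: "0 < lam" "lam < 1" and q: "q > 1" and u1: "u1 < 1"
  shows "Vn n powr (- 2 * real l * c) *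
     (((Rn n \<delta> ^ n) powr (-2*c))^(l-3) * Rn n \<delta> powr (-6*c*real n) * exp (3*real n/2)
       * (pi/(sqrt 3 * (real n/(2*(Rn n \<delta>)\<^sup>2)))) powr real n * q powr (6*c*real n) / (1 - u1)^3)
   \<le> \<delta> powr (-2*real l*c) * \<delta>\<^sup>2 / ((1-lam)\<^sup>2 * (1-u1)^3) * (exp (1/2) * q powr (6*c) / (lam * sqrt 3))^n"
proof -
  define N where "N = real n"
  define V where "V = Vn n"
  define R where "R = Rn n \<delta>"
  define P where "P = R^n"
  define G where "G = Gamma (N/2 + 1)"
  have V: "V > 0" unfolding V_def by (rule Vn_pos)
  have R: "R > 0" unfolding R_def by (rule Rn_pos[OF \<delta>])
  have N: "N \<ge> 1" "N > 0" using n by (auto simp: N_def)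
  have P: "P = \<delta>/V" unfolding P_def R_def V_def by (rule Rn_pow[OF \<delta> n])
  have P0: "P > 0" using R by (simp add: P_def)
  have G: "G > 0" unfolding G_def using N by (intro Gamma_real_pos) simp
  have VG: "V = pi powr (N/2) / G" unfolding V_def Vn_def G_def N_def ..
  have PR: "P = R powr N" using R by (simp add: P_def N_def powr_realpow)
  have u1': "1 - u1 > 0" using u1 by simp
  have E1: "V powr (-2*real l*c) * (P powr (-2*c))^(l-3) * R powr (-6*c*N) = \<delta> powr (-2*real l*c)"
  proof -
    have "(P powr (-2*c))^(l-3) = P powr (real (l-3) * (-2*c))" using P0 by (simp add: powr_power)
    moreover have "R powr (-6*c*N) = P powr (-6*c)" using R by (simp add: PR powr_powr mult.commute)
    moreover have "P powr (real (l-3) * (-2*c)) * P powr (-6*c) = P powr (-2*real l*c)"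
    proof -
      have "real (l-3) * (-2*c) + (-6*c) = -2*real l*c" using l by (simp add: of_nat_diff algebra_simps)
      then show ?thesis by (metis powr_add)
    qed
    moreover have "V powr (-2*real l*c) * P powr (-2*real l*c) = \<delta> powr (-2*real l*c)"
      using V P0 by (simp add: powr_mult[symmetric] P)
    ultimately show ?thesis by (simp add: mult.assoc)
  qed
  have E2: "(pi/(sqrt 3 * (N/(2*R\<^sup>2)))) powr N = (2*pi/(sqrt 3 * N))^n * P\<^sup>2"
  proof -
    have e: "pi/(sqrt 3 * (N/(2*R\<^sup>2))) = 2*pi/(sqrt 3 * N) * R\<^sup>2" using N R by (simp add: field_simps)
    have X0: "2*pi/(sqrt 3 * N) * R\<^sup>2 > 0" using N R by simp
    have "(pi/(sqrt 3 * (N/(2*R\<^sup>2)))) powr N = (2*pi/(sqrt 3 * N) * R\<^sup>2) powr N" by (simp only: e)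
    also have "\<dots> = (2*pi/(sqrt 3 * N) * R\<^sup>2)^n" unfolding N_def by (rule powr_realpow[OF X0[unfolded N_def]])
    finally have "(pi/(sqrt 3 * (N/(2*R\<^sup>2)))) powr N = (2*pi/(sqrt 3 * N) * R\<^sup>2)^n" .
    also have "\<dots> = (2*pi/(sqrt 3 * N))^n * P\<^sup>2"
    proof -
      have "(R\<^sup>2)^n = (R^n)\<^sup>2" by (metis power_mult mult.commute)
      then show ?thesis by (simp only: power_mult_distrib P_def)
    qed
    finally show ?thesis .
  qed
  have E3: "P\<^sup>2 = \<delta>\<^sup>2 * G\<^sup>2 / pi^n"
  proof -
    have "V\<^sup>2 = (pi powr (N/2))\<^sup>2 / G\<^sup>2" by (simp add: VG power_divide)
    also have "(pi powr (N/2))\<^sup>2 = pi^n" by (simp add: powr_power[symmetric] N_def powr_realpow[symmetric] power2_eq_square powr_add[symmetric])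
    finally show ?thesis using V G by (simp add: P power_divide)
  qed
  have GB: "G\<^sup>2 \<le> (N/(2*lam*exp 1))^n / (1-lam)\<^sup>2"
  proof -
    have "G \<le> (N/2/(lam*exp 1)) powr (N/2) / (1 - lam)" unfolding G_def by (rule Gamma_upper) (use N lam in auto)
    then have G2: "G\<^sup>2 \<le> ((N/2/(lam*exp 1)) powr (N/2) / (1 - lam))\<^sup>2" using G by (intro power_mono) auto
    have X2: "((N/2/(lam*exp 1)) powr (N/2))\<^sup>2 = (N/(2*lam*exp 1))^n"
    proof -
      have "((N/2/(lam*exp 1)) powr (N/2))\<^sup>2 = (N/2/(lam*exp 1)) powr (N/2 + N/2)"
        by (simp only: power2_eq_square powr_add)
      also have "\<dots> = (N/(2*lam*exp 1)) powr N"
      proof -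
        have h1: "N/2 + N/2 = N" by simp
        have h2: "N/2/(lam*exp 1) = N/(2*lam*exp 1)" by simp
        show ?thesis by (simp only: h1 h2)
      qed
      also have "\<dots> = (N/(2*lam*exp 1))^n" using N lam by (simp add: N_def powr_realpow)
      finally show ?thesis .
    qed
    show ?thesis using G2 unfolding power_divide X2 .
  qed
  have E4: "(N/(2*lam*exp 1))^n / pi^n * (2*pi/(sqrt 3 * N))^n * exp (3*N/2) * q powr (6*c*N)
     = (exp (1/2) * q powr (6*c) / (lam * sqrt 3))^n"
  proof -
    have "exp (3*N/2) = (exp (3/2))^n" by (simp add: N_def exp_of_nat_mult[symmetric])
    moreover have "q powr (6*c*N) = (q powr (6*c))^n" using q by (simp add: N_def powr_power mult.commute)
    moreover have "N/(2*lam*exp 1) / pi * (2*pi/(sqrt 3 * N)) * exp (3/2) * q powr (6*c)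
       = exp (1/2) * q powr (6*c) / (lam * sqrt 3)"
    proof -
      have "exp (3/2::real) = exp 1 * exp (1/2)" by (simp add: exp_add[symmetric])
      then show ?thesis using N lam by (simp add: field_simps)
    qed
    ultimately show ?thesis by (simp add: power_mult_distrib[symmetric] power_divide[symmetric])
  qed
  define W where "W = (2*pi/(sqrt 3 * N))^n * exp (3*N/2) * q powr (6*c*N) / (1-u1)^3"
  have W0: "W \<ge> 0" using N u1' unfolding W_def by simp
  have "Vn n powr (- 2 * real l * c) *
     (((Rn n \<delta> ^ n) powr (-2*c))^(l-3) * Rn n \<delta> powr (-6*c*real n) * exp (3*real n/2)
       * (pi/(sqrt 3 * (real n/(2*(Rn n \<delta>)\<^sup>2)))) powr real n * q powr (6*c*real n) / (1 - u1)^3)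
     = (V powr (-2*real l*c) * (P powr (-2*c))^(l-3) * R powr (-6*c*N)) * P\<^sup>2 * W"
    unfolding V_def P_def R_def N_def W_def E2[unfolded N_def R_def P_def] by (simp add: algebra_simps)
  also have "\<dots> = \<delta> powr (-2*real l*c) * \<delta>\<^sup>2 * G\<^sup>2 * (W / pi^n)" unfolding E1 E3 by (simp add: algebra_simps)
  also have "\<dots> \<le> \<delta> powr (-2*real l*c) * \<delta>\<^sup>2 * ((N/(2*lam*exp 1))^n / (1-lam)\<^sup>2) * (W / pi^n)"
    by (intro mult_left_mono mult_right_mono GB) (use W0 in auto)
  also have "\<dots> = \<delta> powr (-2*real l*c) * \<delta>\<^sup>2 / ((1-lam)\<^sup>2 * (1-u1)^3) *
      ((N/(2*lam*exp 1))^n / pi^n * (2*pi/(sqrt 3 * N))^n * exp (3*N/2) * q powr (6*c*N))"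
    unfolding W_def by (simp add: field_simps)
  also have "\<dots> = \<delta> powr (-2*real l*c) * \<delta>\<^sup>2 / ((1-lam)\<^sup>2 * (1-u1)^3) * (exp (1/2) * q powr (6*c) / (lam * sqrt 3))^n"
    by (simp only: E4)
  finally show ?thesis .
qed

theorem proposition5p5:
  fixes c \<delta> :: real and l :: nat
  assumes "c > 1/2" and "\<delta> > 0" and "l \<ge> 3"
  shows "\<exists>K > 0. \<exists>\<rho>. 0 < \<rho> \<and> \<rho> < 1 \<and>
    (\<forall>l1 l2 l3 :: nat. l1 > 0 \<longrightarrow> l2 > 0 \<longrightarrow> l3 > 0 \<longrightarrow> l1 + l2 + l3 = l \<longrightarrow>
      (\<forall>n::nat. n \<ge> 1 \<longrightarrow>
         ennreal (Vn n powr (- 2 * real l * c)) *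
         (\<integral>\<^sup>+ x1. \<integral>\<^sup>+ x2. ennreal (fstar n c \<delta> x1 ^ l1 * fstar n c \<delta> x2 ^ l2
              * fstar n c \<delta> (\<lambda>i. x1 i + x2 i) ^ l3) \<partial>Rspace n \<partial>Rspace n)
         \<le> ennreal (K * \<rho> ^ n)))"
proof -
  have c: "c > 1/2" and \<delta>: "\<delta> > 0" and l: "l \<ge> 3" using assms by auto
  define lam :: real where "lam = (exp 1 / 3) powr (1/6)"
  define q :: real where "q = (3 / exp 1) powr (1/(36*c))"
  define u1 where "u1 = q powr (-(2*c-2/3))"
  define \<rho> :: real where "\<rho> = (exp 1 / 3) powr (1/6)"
  define K where "K = \<delta> powr (-2*real l*c) * \<delta>\<^sup>2 / ((1-lam)\<^sup>2 * (1-u1)^3)"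
  have e3: "exp 1 < (3::real)" using e_less_272 by simp
  have lam: "0 < lam" "lam < 1"
  proof -
    show "0 < lam" unfolding lam_def by simp
    have "(exp 1 / 3) powr (1/6) < (1::real) powr (1/6)"
      by (rule powr_less_mono2) (use e3 in auto)
    then show "lam < 1" unfolding lam_def by simp
  qed
  have q: "q > 1"
  proof -
    have "(1::real) powr (1/(36*c)) < (3 / exp 1) powr (1/(36*c))"
      by (rule powr_less_mono2) (use e3 c in auto)
    then show ?thesis unfolding q_def by simp
  qed
  have u1: "u1 < 1" unfolding u1_def by (rule powr_less_one[OF q]) (use c in simp)
  have rho: "0 < \<rho>" "\<rho> < 1" using lam unfolding \<rho>_def lam_def by auto
  have rho_eq: "exp (1/2) * q powr (6*c) / (lam * sqrt 3) = \<rho>"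
  proof -
    have c0: "c > 0" using c by simp
    have l3: "ln (3::real) > 0" by simp
    have lnq: "ln q = (ln 3 - 1) / (36*c)" unfolding q_def using e3 by (simp add: ln_div)
    have lnl: "ln lam = (1 - ln 3) / 6" unfolding lam_def using e3 by (simp add: ln_div)
    have lnr: "ln \<rho> = (1 - ln 3) / 6" unfolding \<rho>_def using e3 by (simp add: ln_div)
    have lns: "ln (sqrt 3) = ln 3 / 2" by (simp add: ln_sqrt)
    have A: "exp (1/2) * q powr (6*c) / (lam * sqrt 3) > 0" using lam q by simp
    have "ln (exp (1/2) * q powr (6*c) / (lam * sqrt 3)) = 1/2 + 6*c * ln q - ln lam - ln (sqrt 3)"
      using lam q by (simp add: ln_div ln_mult)
    also have "\<dots> = ln \<rho>" unfolding lnq lnl lnr lns using c0 by (simp add: field_simps)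
    finally show ?thesis using A rho by simp
  qed
  have K0: "K > 0" unfolding K_def using \<delta> lam u1 by simp
  have main: "ennreal (Vn n powr (- 2 * real l * c)) *
         (\<integral>\<^sup>+ x1. \<integral>\<^sup>+ x2. ennreal (fstar n c \<delta> x1 ^ l1 * fstar n c \<delta> x2 ^ l2
              * fstar n c \<delta> (\<lambda>i. x1 i + x2 i) ^ l3) \<partial>Rspace n \<partial>Rspace n)
         \<le> ennreal (K * \<rho> ^ n)"
    if l1: "l1 > 0" and l2: "l2 > 0" and l3: "l3 > 0" and ls: "l1 + l2 + l3 = l" and n: "n \<ge> 1" for l1 l2 l3 n :: nat
  proof -
    define R where "R = Rn n \<delta>"
    have R: "R > 0" unfolding R_def by (rule Rn_pos[OF \<delta>])
    define M where "M = (R^n) powr (-2*c)"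
    define D where "D = M^(l-3)"
    have D0: "D \<ge> 0" by (simp add: D_def M_def)
    have fs: "fstar n c \<delta> x = (eucl_norm n x ^ n + R^n) powr (-2*c)" for x
      unfolding fstar_def R_def ..
    have f0: "fstar n c \<delta> x \<ge> 0" for x by (simp add: fs)
    have fM: "fstar n c \<delta> x \<le> M" for x
      unfolding fs M_def by (rule powr_mono2') (use R c eucl_norm_nonneg[of n x] in auto)
    have pt: "ennreal (fstar n c \<delta> x1 ^ l1 * fstar n c \<delta> x2 ^ l2 * fstar n c \<delta> (\<lambda>i. x1 i + x2 i) ^ l3)
      \<le> ennreal D * (ennreal ((eucl_norm n x1 ^ n + R^n) powr (-2*c)) * ennreal ((eucl_norm n x2 ^ n + R^n) powr (-2*c))
            * ennreal ((eucl_norm n (\<lambda>i. x1 i + x2 i) ^ n + R^n) powr (-2*c)))" for x1 x2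
    proof -
      have "fstar n c \<delta> x1 ^ l1 * fstar n c \<delta> x2 ^ l2 * fstar n c \<delta> (\<lambda>i. x1 i + x2 i) ^ l3
         \<le> M^(l1+l2+l3-3) * (fstar n c \<delta> x1 * fstar n c \<delta> x2 * fstar n c \<delta> (\<lambda>i. x1 i + x2 i))"
        by (rule integrand_bound) (use f0 fM l1 l2 l3 in auto)
      then have "ennreal (fstar n c \<delta> x1 ^ l1 * fstar n c \<delta> x2 ^ l2 * fstar n c \<delta> (\<lambda>i. x1 i + x2 i) ^ l3)
         \<le> ennreal (D * (fstar n c \<delta> x1 * fstar n c \<delta> x2 * fstar n c \<delta> (\<lambda>i. x1 i + x2 i)))"
        unfolding D_def ls by (rule ennreal_leI)
      also have "\<dots> = ennreal D * (ennreal (fstar n c \<delta> x1) * ennreal (fstar n c \<delta> x2) * ennreal (fstar n c \<delta> (\<lambda>i. x1 i + x2 i)))"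
        using D0 f0 by (simp add: ennreal_mult)
      finally show ?thesis unfolding fs .
    qed
    have "(\<integral>\<^sup>+ x1. \<integral>\<^sup>+ x2. ennreal (fstar n c \<delta> x1 ^ l1 * fstar n c \<delta> x2 ^ l2
              * fstar n c \<delta> (\<lambda>i. x1 i + x2 i) ^ l3) \<partial>Rspace n \<partial>Rspace n)
      \<le> (\<integral>\<^sup>+x1. \<integral>\<^sup>+x2. ennreal D * (ennreal ((eucl_norm n x1 ^ n + R^n) powr (-2*c)) * ennreal ((eucl_norm n x2 ^ n + R^n) powr (-2*c))
            * ennreal ((eucl_norm n (\<lambda>i. x1 i + x2 i) ^ n + R^n) powr (-2*c))) \<partial>Rspace n \<partial>Rspace n)"
      by (intro nn_integral_mono pt)
    also have "\<dots> \<le> ennreal (D * R powr (-6*c*real n) * exp (3*real n/2) * (pi/(sqrt 3 * (real n/(2*R\<^sup>2)))) powr real n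
           * q powr (6*c*real n) / (1 - q powr (-(2*c-2/3)))^3)"
      by (rule triple_bound[OF R q _ n D0]) (use c in simp)
    finally have I: "(\<integral>\<^sup>+ x1. \<integral>\<^sup>+ x2. ennreal (fstar n c \<delta> x1 ^ l1 * fstar n c \<delta> x2 ^ l2
              * fstar n c \<delta> (\<lambda>i. x1 i + x2 i) ^ l3) \<partial>Rspace n \<partial>Rspace n)
      \<le> ennreal (D * R powr (-6*c*real n) * exp (3*real n/2) * (pi/(sqrt 3 * (real n/(2*R\<^sup>2)))) powr real n
           * q powr (6*c*real n) / (1 - u1)^3)" unfolding u1_def .
    have "ennreal (Vn n powr (- 2 * real l * c)) * (\<integral>\<^sup>+ x1. \<integral>\<^sup>+ x2. ennreal (fstar n c \<delta> x1 ^ l1 * fstar n c \<delta> x2 ^ l2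
              * fstar n c \<delta> (\<lambda>i. x1 i + x2 i) ^ l3) \<partial>Rspace n \<partial>Rspace n)
      \<le> ennreal (Vn n powr (- 2 * real l * c)) * ennreal (D * R powr (-6*c*real n) * exp (3*real n/2) * (pi/(sqrt 3 * (real n/(2*R\<^sup>2)))) powr real n
           * q powr (6*c*real n) / (1 - u1)^3)"
      by (rule mult_left_mono[OF I]) simp
    also have "\<dots> = ennreal (Vn n powr (- 2 * real l * c) * (D * R powr (-6*c*real n) * exp (3*real n/2) * (pi/(sqrt 3 * (real n/(2*R\<^sup>2)))) powr real n
           * q powr (6*c*real n) / (1 - u1)^3))"
      by (rule ennreal_mult'[symmetric]) simp
    also have "\<dots> \<le> ennreal (K * \<rho>^n)"
    proof (rule ennreal_leI)
      have "Vn n powr (- 2 * real l * c) * (D * R powr (-6*c*real n) * exp (3*real n/2) * (pi/(sqrt 3 * (real n/(2*R\<^sup>2)))) powr real n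
           * q powr (6*c*real n) / (1 - u1)^3)
          \<le> \<delta> powr (-2*real l*c) * \<delta>\<^sup>2 / ((1-lam)\<^sup>2 * (1-u1)^3) * (exp (1/2) * q powr (6*c) / (lam * sqrt 3))^n"
        unfolding D_def M_def R_def by (rule final_real[OF n \<delta> _ l lam q u1]) (use c in simp)
      then show "Vn n powr (- 2 * real l * c) * (D * R powr (-6*c*real n) * exp (3*real n/2) * (pi/(sqrt 3 * (real n/(2*R\<^sup>2)))) powr real n
           * q powr (6*c*real n) / (1 - u1)^3) \<le> K * \<rho>^n"
        unfolding rho_eq K_def .
    qed
    finally show "ennreal (Vn n powr (- 2 * real l * c)) *
         (\<integral>\<^sup>+ x1. \<integral>\<^sup>+ x2. ennreal (fstar n c \<delta> x1 ^ l1 * fstar n c \<delta> x2 ^ l2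
              * fstar n c \<delta> (\<lambda>i. x1 i + x2 i) ^ l3) \<partial>Rspace n \<partial>Rspace n)
         \<le> ennreal (K * \<rho> ^ n)" .
  qed
  show ?thesis
    apply (rule exI[of _ K], rule conjI[OF K0], rule exI[of _ \<rho>])
    using rho main by blast
qed

end
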